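(* Let $\Bbbk$ be a commutative ring of global dimension zero, $C$ a $\Bbbk$-coalgebra and $M$ a right $C$-comodule finitely generated as a $\Bbbk$-module, with dual $M^*=\mathrm{Hom}_\Bbbk(M,\Bbbk)$. For every $C$-colinear $f\colon M\to M$, the colinear Hattori--Stallings trace $\mathrm{tr}^C(f)$ equals the image of $1\in\Bbbk$ under the composite \[\Bbbk\xrightarrow{\eta}M\square_CM^*\xrightarrow{f\square1}M\square_CM^*\cong\mathrm{coHH}_0(M^*\otimes M,C)\xrightarrow{\langle\epsilon\rangle}\mathrm{coHH}_0(C).\]
   Context: $M^*$ is a left $C$-comodule via $\alpha\mapsto(\alpha\otimes\mathrm{id}_C)\circ\rho\in\mathrm{Hom}_\Bbbk(M,C)\cong C\otimes M^*$. $\eta(1)=\sum_ie_i\otimes e_i^*$ for a basis $(e_i)$ and dual basis $(e_i^* )$ (corresponding to $\mathrm{id}_M$). The isomorphism $M\square_CM^*\cong\mathrm{coHH}_0(M^*\otimes M,C)$ is the swap $m\otimes\alpha\mapsto\alpha\otimes m$, where $\mathrm{coHH}_0(P,C)=\ker(\rho-\tilde t\lambda\colon P\to P\otimes C)$ for a $(C,C)$-bicomodule $P$. $\epsilon\colon M^*\otimes M\to C$ is the $C$-bicolinear map $\alpha\otimes m\mapsto\sum\alpha(m_{(0)})m_{(1)}$ and $\langle\epsilon\rangle$ its restriction. $\mathrm{tr}^C(f)=\sum_i\sum e_i^*(f(e_{i(0)}))e_{i(1)}\in\mathrm{coHH}_0(C)=\ker(\Delta-\tau\Delta)$. *)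

theory Defs
  imports Complex_Main "HOL-Library.Function_Algebras"
begin

definition k_ideal :: "'k::comm_ring_1 set \<Rightarrow> bool" where
  "k_ideal I \<longleftrightarrow> 0 \<in> I \<and> (\<forall>x\<in>I. \<forall>y\<in>I. x + y \<in> I) \<and> (\<forall>a. \<forall>x\<in>I. a * x \<in> I)"

text \<open>Global dimension zero (= semisimple ring): every ideal is a direct summand of the
  regular module.\<close>
definition global_dim_zero :: "'k::comm_ring_1 itself \<Rightarrow> bool" where
  "global_dim_zero _ \<longleftrightarrow>
     (\<forall>I::'k set. k_ideal I \<longrightarrow>
        (\<exists>J. k_ideal J \<and> I \<inter> J = {0} \<and> (\<forall>x. \<exists>a\<in>I. \<exists>b\<in>J. x = a + b)))"

text \<open>An element of a tensor product of k-modules is represented by a finitely supported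
  function u on pairs (formal sum of u(m,n) (m\<otimes>n)); two representatives are equal in the
  tensor product iff their difference lies in the span of the multilinearity relations.\<close>

definition fscale :: "'k::comm_ring_1 \<Rightarrow> ('a \<Rightarrow> 'k) \<Rightarrow> ('a \<Rightarrow> 'k)" where
  "fscale c u = (\<lambda>x. c * u x)"

definition delta :: "'a \<Rightarrow> 'a \<Rightarrow> 'k::comm_ring_1" where
  "delta a = (\<lambda>x. if x = a then 1 else 0)"

definition fin_supp :: "('a \<Rightarrow> 'k::zero) \<Rightarrow> bool" where
  "fin_supp u \<longleftrightarrow> finite {x. u x \<noteq> 0}"

definition rsum :: "('k::comm_ring_1 \<Rightarrow> 'b \<Rightarrow> 'b) \<Rightarrow> ('a \<Rightarrow> 'k) \<Rightarrow> ('a \<Rightarrow> 'b) \<Rightarrow> 'b::comm_monoid_add" where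
  "rsum s u g = (\<Sum>x\<in>{x. u x \<noteq> 0}. s (u x) (g x))"

definition tens_gen ::
  "('k::comm_ring_1 \<Rightarrow> 'm::ab_group_add \<Rightarrow> 'm) \<Rightarrow> ('k \<Rightarrow> 'n::ab_group_add \<Rightarrow> 'n) \<Rightarrow> ('m \<times> 'n \<Rightarrow> 'k) set" where
  "tens_gen s1 s2 =
     {delta (m + m', n) - delta (m, n) - delta (m', n) | m m' n. True} \<union>
     {delta (m, n + n') - delta (m, n) - delta (m, n') | m n n'. True} \<union>
     {delta (s1 a m, n) - fscale a (delta (m, n)) | a m n. True} \<union>
     {delta (m, s2 a n) - fscale a (delta (m, n)) | a m n. True}"

definition tens_eq ::
  "('k::comm_ring_1 \<Rightarrow> 'm::ab_group_add \<Rightarrow> 'm) \<Rightarrow> ('k \<Rightarrow> 'n::ab_group_add \<Rightarrow> 'n) \<Rightarrow>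
   ('m \<times> 'n \<Rightarrow> 'k) \<Rightarrow> ('m \<times> 'n \<Rightarrow> 'k) \<Rightarrow> bool" where
  "tens_eq s1 s2 u v \<longleftrightarrow> u - v \<in> module.span fscale (tens_gen s1 s2)"

definition tens3_gen ::
  "('k::comm_ring_1 \<Rightarrow> 'm::ab_group_add \<Rightarrow> 'm) \<Rightarrow> ('k \<Rightarrow> 'n::ab_group_add \<Rightarrow> 'n) \<Rightarrow>
   ('k \<Rightarrow> 'p::ab_group_add \<Rightarrow> 'p) \<Rightarrow> ('m \<times> 'n \<times> 'p \<Rightarrow> 'k) set" where
  "tens3_gen s1 s2 s3 =
     {delta (m + m', n, p) - delta (m, n, p) - delta (m', n, p) | m m' n p. True} \<union>
     {delta (m, n + n', p) - delta (m, n, p) - delta (m, n', p) | m n n' p. True} \<union>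
     {delta (m, n, p + p') - delta (m, n, p) - delta (m, n, p') | m n p p'. True} \<union>
     {delta (s1 a m, n, p) - fscale a (delta (m, n, p)) | a m n p. True} \<union>
     {delta (m, s2 a n, p) - fscale a (delta (m, n, p)) | a m n p. True} \<union>
     {delta (m, n, s3 a p) - fscale a (delta (m, n, p)) | a m n p. True}"

definition tens3_eq ::
  "('k::comm_ring_1 \<Rightarrow> 'm::ab_group_add \<Rightarrow> 'm) \<Rightarrow> ('k \<Rightarrow> 'n::ab_group_add \<Rightarrow> 'n) \<Rightarrow>
   ('k \<Rightarrow> 'p::ab_group_add \<Rightarrow> 'p) \<Rightarrow> ('m \<times> 'n \<times> 'p \<Rightarrow> 'k) \<Rightarrow> ('m \<times> 'n \<times> 'p \<Rightarrow> 'k) \<Rightarrow> bool" where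
  "tens3_eq s1 s2 s3 u v \<longleftrightarrow> u - v \<in> module.span fscale (tens3_gen s1 s2 s3)"

definition tmap :: "('m \<Rightarrow> 'm') \<Rightarrow> ('n \<Rightarrow> 'n') \<Rightarrow> ('m \<times> 'n \<Rightarrow> 'k::comm_ring_1) \<Rightarrow> ('m' \<times> 'n' \<Rightarrow> 'k)" where
  "tmap g h u = rsum fscale u (\<lambda>(x, y). delta (g x, h y))"

text \<open>(\<phi> \<otimes> id) and (id \<otimes> \<psi>) for maps \<phi> : M \<rightarrow> M \<otimes> N, \<psi> : N \<rightarrow> N \<otimes> P.\<close>
definition tmap_left :: "('m \<Rightarrow> ('a \<times> 'b \<Rightarrow> 'k::comm_ring_1)) \<Rightarrow> ('m \<times> 'c \<Rightarrow> 'k) \<Rightarrow> ('a \<times> 'b \<times> 'c \<Rightarrow> 'k)" where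
  "tmap_left \<phi> u = rsum fscale u (\<lambda>(x, y). rsum fscale (\<phi> x) (\<lambda>(a, b). delta (a, b, y)))"

definition tmap_right :: "('n \<Rightarrow> ('b \<times> 'c \<Rightarrow> 'k::comm_ring_1)) \<Rightarrow> ('a \<times> 'n \<Rightarrow> 'k) \<Rightarrow> ('a \<times> 'b \<times> 'c \<Rightarrow> 'k)" where
  "tmap_right \<psi> u = rsum fscale u (\<lambda>(x, y). rsum fscale (\<psi> y) (\<lambda>(a, b). delta (x, a, b)))"

definition coalgebra ::
  "('k::comm_ring_1 \<Rightarrow> 'c::ab_group_add \<Rightarrow> 'c) \<Rightarrow> ('c \<Rightarrow> ('c \<times> 'c \<Rightarrow> 'k)) \<Rightarrow> ('c \<Rightarrow> 'k) \<Rightarrow> bool" where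
  "coalgebra sC \<Delta> \<epsilon> \<longleftrightarrow>
     module sC \<and> module_hom sC (*) \<epsilon> \<and>
     (\<forall>c. fin_supp (\<Delta> c)) \<and>
     (\<forall>a x y. tens_eq sC sC (\<Delta> (sC a x + y)) (fscale a (\<Delta> x) + \<Delta> y)) \<and>
     (\<forall>c. tens3_eq sC sC sC (tmap_left \<Delta> (\<Delta> c)) (tmap_right \<Delta> (\<Delta> c))) \<and>
     (\<forall>c. rsum sC (\<Delta> c) (\<lambda>(x, y). sC (\<epsilon> x) y) = c) \<and>
     (\<forall>c. rsum sC (\<Delta> c) (\<lambda>(x, y). sC (\<epsilon> y) x) = c)"

definition right_comodule ::
  "('k::comm_ring_1 \<Rightarrow> 'c::ab_group_add \<Rightarrow> 'c) \<Rightarrow> ('c \<Rightarrow> ('c \<times> 'c \<Rightarrow> 'k)) \<Rightarrow> ('c \<Rightarrow> 'k) \<Rightarrow>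
   ('k \<Rightarrow> 'm::ab_group_add \<Rightarrow> 'm) \<Rightarrow> ('m \<Rightarrow> ('m \<times> 'c \<Rightarrow> 'k)) \<Rightarrow> bool" where
  "right_comodule sC \<Delta> \<epsilon> sM \<rho> \<longleftrightarrow>
     module sM \<and>
     (\<forall>m. fin_supp (\<rho> m)) \<and>
     (\<forall>a x y. tens_eq sM sC (\<rho> (sM a x + y)) (fscale a (\<rho> x) + \<rho> y)) \<and>
     (\<forall>m. tens3_eq sM sC sC (tmap_left \<rho> (\<rho> m)) (tmap_right \<Delta> (\<rho> m))) \<and>
     (\<forall>m. rsum sM (\<rho> m) (\<lambda>(x, c). sM (\<epsilon> c) x) = m)"

definition colinear ::
  "('k::comm_ring_1 \<Rightarrow> 'c::ab_group_add \<Rightarrow> 'c) \<Rightarrow> ('k \<Rightarrow> 'm::ab_group_add \<Rightarrow> 'm) \<Rightarrow>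
   ('m \<Rightarrow> ('m \<times> 'c \<Rightarrow> 'k)) \<Rightarrow> ('m \<Rightarrow> 'm) \<Rightarrow> bool" where
  "colinear sC sM \<rho> f \<longleftrightarrow> module_hom sM sM f \<and> (\<forall>m. tens_eq sM sC (\<rho> (f m)) (tmap f id (\<rho> m)))"

definition fin_gen :: "('k::comm_ring_1 \<Rightarrow> 'm::ab_group_add \<Rightarrow> 'm) \<Rightarrow> bool" where
  "fin_gen sM \<longleftrightarrow> (\<exists>G. finite G \<and> module.span sM G = UNIV)"

definition dual_basis ::
  "('k::comm_ring_1 \<Rightarrow> 'm::ab_group_add \<Rightarrow> 'm) \<Rightarrow> 'i set \<Rightarrow> ('i \<Rightarrow> 'm) \<Rightarrow> ('i \<Rightarrow> ('m \<Rightarrow> 'k)) \<Rightarrow> bool" where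
  "dual_basis sM I e es \<longleftrightarrow> finite I \<and> (\<forall>i\<in>I. module_hom sM (*) (es i)) \<and>
     (\<forall>m. m = (\<Sum>i\<in>I. sM (es i m) (e i)))"

definition trC ::
  "('k::comm_ring_1 \<Rightarrow> 'c::ab_group_add \<Rightarrow> 'c) \<Rightarrow> ('m \<Rightarrow> ('m \<times> 'c \<Rightarrow> 'k)) \<Rightarrow>
   'i set \<Rightarrow> ('i \<Rightarrow> 'm) \<Rightarrow> ('i \<Rightarrow> ('m \<Rightarrow> 'k)) \<Rightarrow> ('m \<Rightarrow> 'm) \<Rightarrow> 'c" where
  "trC sC \<rho> I e es f = (\<Sum>i\<in>I. rsum sC (\<rho> (e i)) (\<lambda>(x, c). sC (es i (f x)) c))"

text \<open>\<eta> : k \<rightarrow> M \<box>_C M^*, a \<mapsto> a \<Sum>_i e_i \<otimes> e_i^* (representative in M \<otimes> M^*).\<close>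
definition eta :: "'i set \<Rightarrow> ('i \<Rightarrow> 'm) \<Rightarrow> ('i \<Rightarrow> ('m \<Rightarrow> 'k)) \<Rightarrow> 'k \<Rightarrow> ('m \<times> ('m \<Rightarrow> 'k) \<Rightarrow> 'k::comm_ring_1)" where
  "eta I e es a = fscale a (\<Sum>i\<in>I. delta (e i, es i))"

text \<open>Swap isomorphism M \<box>_C M^* \<cong> coHH_0(M^* \<otimes> M, C), m \<otimes> \<alpha> \<mapsto> \<alpha> \<otimes> m.\<close>
definition tswap :: "('a \<times> 'b \<Rightarrow> 'k) \<Rightarrow> ('b \<times> 'a \<Rightarrow> 'k)" where
  "tswap u = (\<lambda>(b, a). u (a, b))"

text \<open>\<epsilon> : M^* \<otimes> M \<rightarrow> C, \<alpha> \<otimes> m \<mapsto> \<Sum> \<alpha>(m_(0)) m_(1); \<langle>\<epsilon>\<rangle> is its restriction to coHH_0.\<close>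
definition eps_ev ::
  "('k::comm_ring_1 \<Rightarrow> 'c::ab_group_add \<Rightarrow> 'c) \<Rightarrow> ('m \<Rightarrow> ('m \<times> 'c \<Rightarrow> 'k)) \<Rightarrow> (('m \<Rightarrow> 'k) \<times> 'm \<Rightarrow> 'k) \<Rightarrow> 'c" where
  "eps_ev sC \<rho> v = rsum sC v (\<lambda>(\<alpha>, m). rsum sC (\<rho> m) (\<lambda>(x, c). sC (\<alpha> x) c))"

end

theory Submission
  imports Defs
begin

lemma module_fscale: "module (fscale :: 'k::comm_ring_1 \<Rightarrow> ('a \<Rightarrow> 'k) \<Rightarrow> ('a \<Rightarrow> 'k))"
  by unfold_locales (auto simp: fscale_def fun_eq_iff algebra_simps)

lemma fin_supp_add: "fin_supp (u::'a \<Rightarrow> 'k::comm_ring_1) \<Longrightarrow> fin_supp v \<Longrightarrow> fin_supp (u + v)"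
  unfolding fin_supp_def
  by (rule finite_subset[of _ "{x. u x \<noteq> 0} \<union> {x. v x \<noteq> 0}"]) auto

lemma fin_supp_diff: "fin_supp (u::'a \<Rightarrow> 'k::comm_ring_1) \<Longrightarrow> fin_supp v \<Longrightarrow> fin_supp (u - v)"
  unfolding fin_supp_def
  by (rule finite_subset[of _ "{x. u x \<noteq> 0} \<union> {x. v x \<noteq> 0}"]) auto

lemma fin_supp_scale: "fin_supp u \<Longrightarrow> fin_supp (fscale a u)"
  unfolding fin_supp_def fscale_def
  by (rule finite_subset[of _ "{x. u x \<noteq> 0}"]) auto

lemma fin_supp_delta: "fin_supp (delta p)"
  unfolding fin_supp_def delta_def
  by (rule finite_subset[of _ "{p}"]) auto

lemma fin_supp_zero: "fin_supp 0"
  unfolding fin_supp_def by simp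

lemma fin_supp_sum: "finite I \<Longrightarrow> (\<And>i. i \<in> I \<Longrightarrow> fin_supp (u i :: 'a \<Rightarrow> 'k::comm_ring_1)) \<Longrightarrow> fin_supp (\<Sum>i\<in>I. u i)"
  by (induction I rule: finite_induct) (auto intro!: fin_supp_add fin_supp_zero)
context module begin

lemma rsum_eq_sum:
  assumes "finite S" "{x. u x \<noteq> 0} \<subseteq> S"
  shows "rsum scale u g = (\<Sum>x\<in>S. scale (u x) (g x))"
  unfolding rsum_def
  by (rule sum.mono_neutral_left) (use assms in auto)

lemma rsum_add:
  assumes "fin_supp u" "fin_supp v"
  shows "rsum scale (u + v) g = rsum scale u g + rsum scale v g"
proof -
  let ?S = "{x. u x \<noteq> 0} \<union> {x. v x \<noteq> 0}"
  have f: "finite ?S" using assms by (auto simp: fin_supp_def)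
  have "rsum scale (u + v) g = (\<Sum>x\<in>?S. scale ((u+v) x) (g x))"
    by (rule rsum_eq_sum[OF f]) auto
  also have "\<dots> = (\<Sum>x\<in>?S. scale (u x) (g x)) + (\<Sum>x\<in>?S. scale (v x) (g x))"
    by (simp add: scale_left_distrib sum.distrib)
  also have "\<dots> = rsum scale u g + rsum scale v g"
    by (subst (1 2) rsum_eq_sum[OF f]) auto
  finally show ?thesis .
qed

lemma rsum_diff:
  assumes "fin_supp u" "fin_supp v"
  shows "rsum scale (u - v) g = rsum scale u g - rsum scale v g"
proof -
  let ?S = "{x. u x \<noteq> 0} \<union> {x. v x \<noteq> 0}"
  have f: "finite ?S" using assms by (auto simp: fin_supp_def)
  have "rsum scale (u - v) g = (\<Sum>x\<in>?S. scale ((u-v) x) (g x))"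
    by (rule rsum_eq_sum[OF f]) auto
  also have "\<dots> = (\<Sum>x\<in>?S. scale (u x) (g x)) - (\<Sum>x\<in>?S. scale (v x) (g x))"
    by (simp add: scale_left_diff_distrib sum_subtractf)
  also have "\<dots> = rsum scale u g - rsum scale v g"
    by (subst (1 2) rsum_eq_sum[OF f]) auto
  finally show ?thesis .
qed

lemma rsum_scale:
  assumes "fin_supp u"
  shows "rsum scale (fscale a u) g = scale a (rsum scale u g)"
proof -
  let ?S = "{x. u x \<noteq> 0}"
  have f: "finite ?S" using assms by (auto simp: fin_supp_def)
  have "rsum scale (fscale a u) g = (\<Sum>x\<in>?S. scale (fscale a u x) (g x))"
    by (rule rsum_eq_sum[OF f]) (auto simp: fscale_def)
  also have "\<dots> = scale a (\<Sum>x\<in>?S. scale (u x) (g x))"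
    by (simp add: scale_sum_right fscale_def)
  also have "\<dots> = scale a (rsum scale u g)"
    by (simp add: rsum_def)
  finally show ?thesis .
qed

lemma rsum_zero: "rsum scale (0::'x\<Rightarrow>'a) g = 0"
  apply (unfold rsum_def)
  apply (simp add: zero_fun_def)
  done

lemma rsum_delta: "rsum scale (delta p) g = g p"
  by (subst rsum_eq_sum[of "{p}"]) (auto simp: delta_def)

lemma rsum_sum:
  assumes "finite I" "\<And>i. i \<in> I \<Longrightarrow> fin_supp (u i)"
  shows "rsum scale (\<Sum>i\<in>I. u i) g = (\<Sum>i\<in>I. rsum scale (u i) g)"
  using assms
proof (induction I rule: finite_induct)
  case empty then show ?case by (simp add: rsum_def)
next
  case (insert x F)
  have "rsum scale (u x + sum u F) g = rsum scale (u x) g + rsum scale (sum u F) g"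
    using insert by (intro rsum_add) (auto intro: fin_supp_sum)
  moreover have "rsum scale (sum u F) g = (\<Sum>i\<in>F. rsum scale (u i) g)"
    using insert by auto
  ultimately show ?case
    using sum.insert[OF insert(1,2), of u] sum.insert[OF insert(1,2), of "\<lambda>i. rsum scale (u i) g"]
    by metis
qed

lemma rsum_rsum_fscale:
  assumes "fin_supp w" "\<And>x. fin_supp (h x)"
  shows "rsum scale (rsum fscale w h) g = rsum scale w (\<lambda>x. rsum scale (h x) g)"
proof -
  let ?S = "{x. w x \<noteq> 0}"
  have "rsum scale (rsum fscale w h) g = rsum scale (\<Sum>x\<in>?S. fscale (w x) (h x)) g"
    by (simp add: rsum_def)
  also have "\<dots> = (\<Sum>x\<in>?S. rsum scale (fscale (w x) (h x)) g)"
    using assms by (intro rsum_sum) (auto simp: fin_supp_def intro: fin_supp_scale[unfolded fin_supp_def])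
  also have "\<dots> = rsum scale w (\<lambda>x. rsum scale (h x) g)"
    using assms by (simp add: rsum_scale) (simp add: rsum_def)
  finally show ?thesis .
qed

end


lemma sum_fun_app: "(\<Sum>i\<in>I. (h i :: 'a \<Rightarrow> 'b::comm_monoid_add)) p = (\<Sum>i\<in>I. h i p)"
  by (induction I rule: infinite_finite_induct) auto

lemma span_kill:
  fixes sM :: "'k::comm_ring_1 \<Rightarrow> 'm::ab_group_add \<Rightarrow> 'm" and sC :: "'k \<Rightarrow> 'c::ab_group_add \<Rightarrow> 'c"
  assumes mM: "module sM" and mC: "module sC" and hom: "module_hom sM (*) \<alpha>"
    and u: "u \<in> module.span fscale (tens_gen sM sC)"
  shows "fin_supp u \<and> rsum sC u (\<lambda>(x, c). sC (\<alpha> x) c) = 0"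
proof -
  let ?g = "\<lambda>(x, c). sC (\<alpha> x) c"
  have gen: "fin_supp x \<and> rsum sC x ?g = 0" if "x \<in> tens_gen sM sC" for x
    using that unfolding tens_gen_def
  proof (elim UnE CollectE exE conjE)
    fix m m' n assume x: "x = delta (m + m', n) - delta (m, n) - delta (m', n)"
    show ?thesis unfolding x
      by (simp add: fin_supp_diff fin_supp_delta module.rsum_diff[OF mC] module.rsum_delta[OF mC]
          module_hom.add[OF hom] module.scale_left_distrib[OF mC])
  next
    fix m n n' assume x: "x = delta (m, n + n') - delta (m, n) - delta (m, n')"
    show ?thesis unfolding x
      by (simp add: fin_supp_diff fin_supp_delta module.rsum_diff[OF mC] module.rsum_delta[OF mC]
          module.scale_right_distrib[OF mC])
  next
    fix a m n assume x: "x = delta (sM a m, n) - fscale a (delta (m, n))"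
    show ?thesis unfolding x
      by (simp add: fin_supp_diff fin_supp_delta fin_supp_scale module.rsum_diff[OF mC] module.rsum_delta[OF mC]
          module.rsum_scale[OF mC] module_hom.scale[OF hom] module.scale_scale[OF mC])
  next
    fix a m n assume x: "x = delta (m, sC a n) - fscale a (delta (m, n))"
    show ?thesis unfolding x
      by (simp add: fin_supp_diff fin_supp_delta fin_supp_scale module.rsum_diff[OF mC] module.rsum_delta[OF mC]
          module.rsum_scale[OF mC] module.scale_scale[OF mC] mult.commute)
  qed
  show ?thesis
  proof (rule module.span_induct_alt[OF module_fscale u])
    show "fin_supp 0 \<and> rsum sC 0 ?g = 0"
      by (simp add: fin_supp_zero rsum_def)
  next
    fix c x y assume x: "x \<in> tens_gen sM sC" and y: "fin_supp y \<and> rsum sC y ?g = 0"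
    have fx: "fin_supp (fscale c x)" using gen[OF x] by (simp add: fin_supp_scale)
    show "fin_supp (fscale c x + y) \<and> rsum sC (fscale c x + y) ?g = 0"
      using gen[OF x] y fx
      by (simp add: fin_supp_add module.rsum_add[OF mC] module.rsum_scale[OF mC] module.scale_zero_right[OF mC])
  qed
qed


lemma fin_supp_tmap: "fin_supp w \<Longrightarrow> fin_supp (tmap g h (w :: _ \<Rightarrow> 'k::comm_ring_1))"
  unfolding tmap_def rsum_def
  by (rule fin_supp_sum) (auto simp: fin_supp_def intro: fin_supp_scale[unfolded fin_supp_def] fin_supp_delta[unfolded fin_supp_def] split: prod.splits)

theorem proposition6p5:
  fixes sC :: "'k::comm_ring_1 \<Rightarrow> 'c::ab_group_add \<Rightarrow> 'c"
    and \<Delta> :: "'c \<Rightarrow> ('c \<times> 'c \<Rightarrow> 'k)" and \<epsilon>C :: "'c \<Rightarrow> 'k"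
    and sM :: "'k \<Rightarrow> 'm::ab_group_add \<Rightarrow> 'm" and \<rho> :: "'m \<Rightarrow> ('m \<times> 'c \<Rightarrow> 'k)"
    and f :: "'m \<Rightarrow> 'm"
    and I :: "'i set" and e :: "'i \<Rightarrow> 'm" and es :: "'i \<Rightarrow> ('m \<Rightarrow> 'k)"
  assumes "global_dim_zero TYPE('k)"
    and "coalgebra sC \<Delta> \<epsilon>C"
    and "right_comodule sC \<Delta> \<epsilon>C sM \<rho>"
    and "fin_gen sM"
    and "colinear sC sM \<rho> f"
    and "dual_basis sM I e es"
  shows "trC sC \<rho> I e es f = eps_ev sC \<rho> (tswap (tmap f id (eta I e es 1)))"
proof -
  have mC: "module sC" using assms(2) by (simp add: coalgebra_def)
  have mM: "module sM" and fsr: "\<And>m. fin_supp (\<rho> m)" using assms(3) by (auto simp: right_comodule_def)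
  have col: "\<And>m. tens_eq sM sC (\<rho> (f m)) (tmap f id (\<rho> m))" using assms(5) by (simp add: colinear_def)
  have fI: "finite I" and hom: "\<And>i. i \<in> I \<Longrightarrow> module_hom sM (*) (es i)"
    using assms(6) by (auto simp: dual_basis_def)
  define L where "L = (\<lambda>(\<alpha>::'m \<Rightarrow> 'k) (u::'m \<times> 'c \<Rightarrow> 'k). rsum sC u (\<lambda>(x, c). sC (\<alpha> x) c))"
  have "eta I e es 1 = (\<Sum>i\<in>I. delta (e i, es i))"
    by (simp add: eta_def fscale_def)
  hence "tmap f id (eta I e es 1) = (\<Sum>i\<in>I. delta (f (e i), es i))"
    by (simp add: tmap_def module.rsum_sum[OF module_fscale] fI fin_supp_delta module.rsum_delta[OF module_fscale])
  hence "tswap (tmap f id (eta I e es 1)) = (\<Sum>i\<in>I. delta (es i, f (e i)))"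
    by (auto simp: tswap_def fun_eq_iff sum_fun_app delta_def conj_commute)
  hence rhs: "eps_ev sC \<rho> (tswap (tmap f id (eta I e es 1))) = (\<Sum>i\<in>I. L (es i) (\<rho> (f (e i))))"
    by (simp add: eps_ev_def module.rsum_sum[OF mC] fI fin_supp_delta module.rsum_delta[OF mC] L_def)
  have step: "L (es i) (\<rho> (f (e i))) = rsum sC (\<rho> (e i)) (\<lambda>(x, c). sC (es i (f x)) c)" if i: "i \<in> I" for i
  proof -
    have ft: "fin_supp (tmap f id (\<rho> (e i)))" by (rule fin_supp_tmap[OF fsr])
    have "\<rho> (f (e i)) - tmap f id (\<rho> (e i)) \<in> module.span fscale (tens_gen sM sC)"
      using col[of "e i"] by (simp add: tens_eq_def)
    from span_kill[OF mM mC hom[OF i] this]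
    have "L (es i) (\<rho> (f (e i)) - tmap f id (\<rho> (e i))) = 0" by (simp add: L_def)
    hence "L (es i) (\<rho> (f (e i))) = L (es i) (tmap f id (\<rho> (e i)))"
      by (simp add: L_def module.rsum_diff[OF mC fsr ft])
    also have "\<dots> = rsum sC (\<rho> (e i)) (\<lambda>p. L (es i) (case p of (x, y) \<Rightarrow> delta (f x, id y)))"
      unfolding L_def tmap_def
      by (rule module.rsum_rsum_fscale[OF mC fsr]) (auto simp: fin_supp_delta split: prod.splits)
    also have "\<dots> = rsum sC (\<rho> (e i)) (\<lambda>(x, c). sC (es i (f x)) c)"
      by (rule arg_cong[where f="rsum sC (\<rho> (e i))"])
         (auto simp: fun_eq_iff L_def module.rsum_delta[OF mC] split: prod.splits)
    finally show ?thesis .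
  qed
  show ?thesis unfolding rhs trC_def
    by (rule sum.cong) (auto simp: step)
qed

end
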